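(* Let $d,n\in\mathbb{N}$ be such that $h_c(d,n)$ is finite (defined). For every $\alpha\in(0,1)$ there exists $\beta=\beta(\alpha,h_c(d,n))\in(0,1)$ such that the following holds: for any finite family $\mathcal{F}$ of axis-parallel boxes in $\mathbb{R}^d$, if at least an $\alpha$ fraction of all $h_c(d,n)$-element subfamilies of $\mathcal{F}$ are $n$-pierceable, then there exists a subfamily of $\mathcal{F}$ of size at least $\beta|\mathcal{F}|$ which is $n$-pierceable.
   Context: An axis-parallel box in $\mathbb{R}^d$ is a set $[\alpha_1,\beta_1]\times\dots\times[\alpha_d,\beta_d]$ with $\alpha_j\le\beta_j$. A family $\mathcal{F}$ is $n$-pierceable if there is $A\subseteq\mathbb{R}^d$, $|A|\le n$, meeting every member of $\mathcal{F}$. Given families $\mathcal{F}_1,\dots,\mathcal{F}_m$, a colorful $t$-tuple is a tuple $(C_1,\dots,C_t)$ with $C_j\in\mathcal{F}_{i_j}$ for pairwise distinct indices $i_1,\dots,i_t\in[m]$. $h_c(d,n)$ denotes the smallest positive integer $h$ such that whenever $\mathcal{F}_1,\dots,\mathcal{F}_h$ are collections of axis-parallel boxes in $\mathbb{R}^d$ with every colorful $h$-tuple $n$-pierceable, some $\mathcal{F}_i$ is $n$-pierceable (e.g. $h_c(1,n)=n+1$, $h_c(d,2)=3d$). *)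

theory Defs
  imports Complex_Main
begin

text \<open>Points of R^d are represented as functions nat => real vanishing at all
  coordinates i >= d.\<close>

definition box_of :: "nat \<Rightarrow> (nat \<Rightarrow> real) \<Rightarrow> (nat \<Rightarrow> real) \<Rightarrow> (nat \<Rightarrow> real) set" where
  "box_of d a b = {x. (\<forall>i<d. a i \<le> x i \<and> x i \<le> b i) \<and> (\<forall>i\<ge>d. x i = 0)}"

definition is_box :: "nat \<Rightarrow> (nat \<Rightarrow> real) set \<Rightarrow> bool" where
  "is_box d C \<longleftrightarrow> (\<exists>a b. (\<forall>i<d. a i \<le> b i) \<and> C = box_of d a b)"

definition pierceable :: "nat \<Rightarrow> ('a set) set \<Rightarrow> bool" where
  "pierceable n F \<longleftrightarrow> (\<exists>A. finite A \<and> card A \<le> n \<and> (\<forall>C\<in>F. A \<inter> C \<noteq> {}))"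

definition hc_prop :: "nat \<Rightarrow> nat \<Rightarrow> nat \<Rightarrow> bool" where
  "hc_prop d n h \<longleftrightarrow> 0 < h \<and>
     (\<forall>Fs :: nat \<Rightarrow> (nat \<Rightarrow> real) set set.
        (\<forall>i<h. \<forall>C\<in>Fs i. is_box d C) \<and>
        (\<forall>g. (\<forall>i<h. g i \<in> Fs i) \<longrightarrow> pierceable n (g ` {..<h}))
        \<longrightarrow> (\<exists>i<h. pierceable n (Fs i)))"

definition hc_defined :: "nat \<Rightarrow> nat \<Rightarrow> bool" where
  "hc_defined d n \<longleftrightarrow> (\<exists>h. hc_prop d n h)"

definition hc :: "nat \<Rightarrow> nat \<Rightarrow> nat" where
  "hc d n = (LEAST h. hc_prop d n h)"

end

theory Submission
  imports Defs
begin


definition lst :: "'a set \<Rightarrow> nat \<Rightarrow> 'a list set" where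
  "lst A m = {xs. set xs \<subseteq> A \<and> length xs = m}"

lemma lst_finite: "finite A \<Longrightarrow> finite (lst A m)"
  unfolding lst_def by (rule finite_lists_length_eq)

lemma lst_card: "finite A \<Longrightarrow> card (lst A m) = card A ^ m"
  unfolding lst_def by (rule card_lists_length_eq)

lemma lst_0: "lst A 0 = {[]}" unfolding lst_def by auto

lemma lst_Suc: "lst A (Suc m) = (\<lambda>(x,xs). x # xs) ` (A \<times> lst A m)"
  unfolding lst_def
  apply (rule set_eqI)
  apply (case_tac x)
   apply auto
  done

lemma lst_mono: "A \<subseteq> B \<Longrightarrow> lst A m \<subseteq> lst B m"
  unfolding lst_def by auto

lemma sum_lst_Suc:
  assumes "finite A"
  shows "(\<Sum>xs\<in>lst A (Suc m). f xs) = (\<Sum>x\<in>A. \<Sum>xs\<in>lst A m. f (x # xs))"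
proof -
  have inj: "inj_on (\<lambda>(x,xs). x # xs) (A \<times> lst A m)" by (auto simp: inj_on_def)
  have "(\<Sum>xs\<in>lst A (Suc m). f xs) = (\<Sum>p\<in>A \<times> lst A m. f ((\<lambda>(x,xs). x # xs) p))"
    unfolding lst_Suc by (rule sum.reindex[OF inj, unfolded comp_def])
  also have "\<dots> = (\<Sum>x\<in>A. \<Sum>xs\<in>lst A m. f (x # xs))"
    using sum.cartesian_product[of "\<lambda>x xs. f (x#xs)" "lst A m" A] by (simp add: case_prod_beta)
  finally show ?thesis .
qed

lemma card_eq_sum_ind: "finite A \<Longrightarrow> card {x\<in>A. P x} = (\<Sum>x\<in>A. if P x then 1 else 0)"
  by (simp add: sum.If_cases Int_def conj_commute)

lemma sum_card_cons:
  assumes "finite A"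
  shows "(\<Sum>s\<in>lst A m. card {v\<in>A. P (v # s)}) = card {t\<in>lst A (Suc m). P t}"
proof -
  have "card {t\<in>lst A (Suc m). P t} = (\<Sum>t\<in>lst A (Suc m). if P t then 1 else 0)"
    using lst_finite[OF assms] by (rule card_eq_sum_ind)
  also have "\<dots> = (\<Sum>v\<in>A. \<Sum>s\<in>lst A m. if P (v#s) then 1 else 0)"
    by (rule sum_lst_Suc[OF assms])
  also have "\<dots> = (\<Sum>s\<in>lst A m. \<Sum>v\<in>A. if P (v#s) then 1 else 0)"
    by (rule sum.swap)
  also have "\<dots> = (\<Sum>s\<in>lst A m. card {v\<in>A. P (v # s)})"
    using assms by (simp add: card_eq_sum_ind)
  finally show ?thesis by simp
qed

lemma card_swap:
  assumes "finite A" "finite B"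
  shows "(\<Sum>a\<in>A. card {b\<in>B. Q a b}) = (\<Sum>b\<in>B. card {a\<in>A. Q a b})"
proof -
  have "(\<Sum>a\<in>A. card {b\<in>B. Q a b}) = (\<Sum>a\<in>A. \<Sum>b\<in>B. if Q a b then 1 else 0)"
    using assms by (simp add: card_eq_sum_ind)
  also have "\<dots> = (\<Sum>b\<in>B. \<Sum>a\<in>A. if Q a b then 1 else 0)" by (rule sum.swap)
  also have "\<dots> = (\<Sum>b\<in>B. card {a\<in>A. Q a b})"
    using assms by (simp add: card_eq_sum_ind)
  finally show ?thesis .
qed



fun R :: "('a set \<Rightarrow> bool) \<Rightarrow> 'a list list \<Rightarrow> 'a set \<Rightarrow> bool" where
  "R good [] U = good U"
| "R good (T # Ts) U = (\<forall>a\<in>set T. R good Ts (insert a U))"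

lemma R_transv:
  "R good Ts U \<Longrightarrow> (\<forall>i<length Ts. g i \<in> set (Ts ! i)) \<Longrightarrow> good (g ` {..<length Ts} \<union> U)"
proof (induction Ts arbitrary: U g)
  case Nil
  then show ?case by simp
next
  case (Cons T Ts)
  have g0: "g 0 \<in> set T" using Cons.prems(2) by auto
  have "R good Ts (insert (g 0) U)" using Cons.prems(1) g0 by simp
  moreover have "\<forall>i<length Ts. (g \<circ> Suc) i \<in> set (Ts ! i)" using Cons.prems(2) by auto
  ultimately have "good ((g \<circ> Suc) ` {..<length Ts} \<union> insert (g 0) U)" by (rule Cons.IH)
  moreover have "(g \<circ> Suc) ` {..<length Ts} \<union> insert (g 0) U = g ` {..<length (T # Ts)} \<union> U"
    by (auto simp: lessThan_Suc_eq_insert_0 image_image)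
  ultimately show ?case by simp
qed

definition XW :: "('a set \<Rightarrow> bool) \<Rightarrow> 'a set \<Rightarrow> 'a list list \<Rightarrow> 'a list \<Rightarrow> 'a set" where
  "XW good W Ts s = {v\<in>W. R good Ts (insert v (set s))}"

definition DW :: "('a set \<Rightarrow> bool) \<Rightarrow> 'a set \<Rightarrow> 'a list list \<Rightarrow> 'a list \<Rightarrow> 'a set" where
  "DW good W Ts s = {v\<in>W. \<not> R good Ts (insert v (set s))}"

definition eps :: "nat \<Rightarrow> real" where
  "eps h = 1 / (2 * (2 * real h) ^ (h - 1))"

locale absF =
  fixes V :: "'a set" and good :: "'a set \<Rightarrow> bool" and h :: nat
  assumes finV: "finite V"
  and hpos: "0 < h"
  and mono: "good B \<Longrightarrow> A \<subseteq> B \<Longrightarrow> good A"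
  and good_empty: "good {}"
  and CP: "\<And>Fs. (\<forall>i<h. Fs i \<subseteq> V) \<Longrightarrow> (\<forall>g. (\<forall>i<h. g i \<in> Fs i) \<longrightarrow> good (g ` {..<h}))
             \<Longrightarrow> \<exists>i<h. good (Fs i)"
begin

definition ng :: "'a set \<Rightarrow> nat" where
  "ng W = card {t\<in>lst W h. \<not> good (set t)}"

lemma final_good:
  assumes W: "W \<subseteq> V" and len: "length Ts = h - 1"
    and blocks: "\<forall>T\<in>set Ts. set T \<subseteq> V \<and> \<not> good (set T)"
  shows "good (XW good W Ts [])"
proof -
  define Fs where "Fs = (\<lambda>i. if i < h - 1 then set (Ts ! i) else XW good W Ts [])"
  have sub: "\<forall>i<h. Fs i \<subseteq> V"
    using blocks W len by (auto simp: Fs_def XW_def)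
  have tr: "\<forall>g. (\<forall>i<h. g i \<in> Fs i) \<longrightarrow> good (g ` {..<h})"
  proof (intro allI impI)
    fix g assume gi: "\<forall>i<h. g i \<in> Fs i"
    have "g (h - 1) \<in> Fs (h - 1)" using gi hpos by simp
    then have "g (h - 1) \<in> XW good W Ts []" by (simp add: Fs_def)
    then have r: "R good Ts {g (h - 1)}" by (simp add: XW_def)
    have "\<forall>i<length Ts. g i \<in> set (Ts ! i)"
    proof (intro allI impI)
      fix i assume "i < length Ts"
      then have "i < h" "i < h - 1" using len by auto
      then show "g i \<in> set (Ts ! i)" using gi by (auto simp: Fs_def)
    qed
    from R_transv[OF r this] have "good (g ` {..<h - 1} \<union> {g (h - 1)})" using len by simp
    moreover have "g ` {..<h - 1} \<union> {g (h - 1)} = g ` {..<h}"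
    proof -
      have "{..<h} = insert (h - 1) {..<h - 1}" using hpos by auto
      then show ?thesis by auto
    qed
    ultimately show "good (g ` {..<h})" by simp
  qed
  obtain i where "i < h" "good (Fs i)" using CP[OF sub tr] by blast
  then show ?thesis using blocks len by (auto simp: Fs_def split: if_splits)
qed

lemma helly:
  assumes "Z \<subseteq> V" and all: "\<forall>t\<in>lst Z h. good (set t)"
  shows "good Z"
proof -
  have sub: "\<forall>i<h. (\<lambda>_. Z) i \<subseteq> V" using assms by auto
  have tr: "\<forall>g. (\<forall>i<h. g i \<in> (\<lambda>_. Z) i) \<longrightarrow> good (g ` {..<h})"
  proof (intro allI impI)
    fix g assume gi: "\<forall>i<h. g i \<in> (\<lambda>_. Z) i"
    have "map g [0..<h] \<in> lst Z h" using gi by (auto simp: lst_def)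
    then have "good (set (map g [0..<h]))" using all by blast
    then show "good (g ` {..<h})" by (simp add: atLeast0LessThan)
  qed
  show ?thesis using CP[OF sub tr] by auto
qed

end


lemma eps_pos: "0 < eps h" by (cases h) (auto simp: eps_def)

context absF begin

lemma DW_sub: "DW good W Ts s \<subseteq> W" by (auto simp: DW_def)

lemma DW_cons_sub:
  assumes "set T \<subseteq> Y"
  shows "DW good Y (T # Ts) s' \<subseteq> (\<Union>a\<in>set T. {b\<in>Y. a \<in> DW good Y Ts (b # s')})"
  using assms by (auto simp: DW_def insert_commute)

lemma dense_iter:
  assumes Y: "Y \<subseteq> V" and Mpos: "0 < card Y"
    and ngY: "real (ng Y) \<le> eps h * real (card Y) ^ h"
  shows "j \<le> h - 1 \<Longrightarrow> (\<exists>Z\<subseteq>Y. good Z \<and> real (card Z) \<ge> real (card Y) / 2) \<or>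
     (\<exists>Ts. length Ts = j \<and> (\<forall>T\<in>set Ts. T \<in> lst Y h \<and> \<not> good (set T)) \<and>
        real (\<Sum>s\<in>lst Y (h - 1 - j). card (DW good Y Ts s)) \<le> (2 * real h) ^ j * eps h * real (card Y) ^ (h - j))"
proof (induction j)
  case 0
  have finY: "finite Y" using Y finV finite_subset by blast
  have "(\<Sum>s\<in>lst Y (h - 1). card (DW good Y [] s)) = (\<Sum>s\<in>lst Y (h - 1). card {v\<in>Y. \<not> good (set (v # s))})"
    by (simp add: DW_def)
  also have "\<dots> = card {t\<in>lst Y (Suc (h - 1)). \<not> good (set t)}"
    by (rule sum_card_cons[OF finY])
  also have "\<dots> = ng Y" using hpos by (simp add: ng_def)
  finally show ?case using ngY by (intro disjI2 exI[of _ "[]"]) simp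
next
  case (Suc j)
  let ?M = "real (card Y)"
  have finY: "finite Y" using Y finV finite_subset by blast
  from Suc.prems have "j \<le> h - 1" by simp
  from Suc.IH[OF this] show ?case
  proof
    assume "\<exists>Z\<subseteq>Y. good Z \<and> real (card Z) \<ge> real (card Y) / 2"
    then show ?thesis by blast
  next
    assume "\<exists>Ts. length Ts = j \<and> (\<forall>T\<in>set Ts. T \<in> lst Y h \<and> \<not> good (set T)) \<and>
        real (\<Sum>s\<in>lst Y (h - 1 - j). card (DW good Y Ts s)) \<le> (2 * real h) ^ j * eps h * real (card Y) ^ (h - j)"
    then obtain Ts where len: "length Ts = j" and blk: "\<forall>T\<in>set Ts. T \<in> lst Y h \<and> \<not> good (set T)"
      and bnd: "real (\<Sum>s\<in>lst Y (h - 1 - j). card (DW good Y Ts s)) \<le> (2 * real h) ^ j * eps h * ?M ^ (h - j)"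
      by blast
    define r where "r = h - 1 - Suc j"
    have hr: "h - 1 - j = Suc r" "h - j = Suc (Suc r)" "h - Suc j = Suc r" using Suc.prems by (auto simp: r_def)
    define \<kappa> where "\<kappa> = (2 * real h) ^ j * eps h"
    have kpos: "0 < \<kappa>" using hpos eps_pos by (simp add: \<kappa>_def)
    define \<phi> where "\<phi> a = card {s\<in>lst Y (Suc r). a \<in> DW good Y Ts s}" for a
    have sumphi: "(\<Sum>a\<in>Y. \<phi> a) = (\<Sum>s\<in>lst Y (Suc r). card (DW good Y Ts s))"
    proof -
      have "(\<Sum>a\<in>Y. \<phi> a) = (\<Sum>s\<in>lst Y (Suc r). card {a\<in>Y. a \<in> DW good Y Ts s})"
        unfolding \<phi>_def by (rule card_swap[OF finY lst_finite[OF finY]])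
      also have "\<dots> = (\<Sum>s\<in>lst Y (Suc r). card (DW good Y Ts s))"
        by (rule sum.cong) (auto simp: DW_def intro!: arg_cong[where f=card])
      finally show ?thesis .
    qed
    have sumphi_le: "real (\<Sum>a\<in>Y. \<phi> a) \<le> \<kappa> * ?M ^ Suc (Suc r)"
      using bnd sumphi hr by (simp add: \<kappa>_def)
    define L where "L = {a\<in>Y. real (\<phi> a) \<le> 2 * \<kappa> * ?M ^ Suc r}"
    have LY: "L \<subseteq> Y" by (auto simp: L_def)
    have cardL: "real (card L) \<ge> ?M / 2"
    proof -
      have H: "Y - L = {a\<in>Y. 2 * \<kappa> * ?M ^ Suc r < real (\<phi> a)}" by (auto simp: L_def)
      have "real (card (Y - L)) * (2 * \<kappa> * ?M ^ Suc r) = (\<Sum>a\<in>Y - L. 2 * \<kappa> * ?M ^ Suc r)"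
        by simp
      also have "\<dots> \<le> (\<Sum>a\<in>Y - L. real (\<phi> a))"
        by (rule sum_mono) (auto simp: H)
      also have "\<dots> \<le> (\<Sum>a\<in>Y. real (\<phi> a))"
        by (rule sum_mono2) (auto simp: finY)
      also have "\<dots> \<le> \<kappa> * ?M ^ Suc (Suc r)" using sumphi_le by simp
      finally have "real (card (Y - L)) * (2 * \<kappa> * ?M ^ Suc r) \<le> \<kappa> * ?M ^ Suc (Suc r)" .
      moreover have "0 < \<kappa> * ?M ^ Suc r" using kpos Mpos by simp
      ultimately have "real (card (Y - L)) * 2 \<le> ?M"
      proof -
        assume a1: "real (card (Y - L)) * (2 * \<kappa> * ?M ^ Suc r) \<le> \<kappa> * ?M ^ Suc (Suc r)"
          and a2: "0 < \<kappa> * ?M ^ Suc r"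
        have "(\<kappa> * ?M ^ Suc r) * (real (card (Y - L)) * 2) \<le> (\<kappa> * ?M ^ Suc r) * ?M"
          using a1 by (simp only: power_Suc) (simp add: algebra_simps)
        then show ?thesis using a2 by (simp only: mult_le_cancel_left_pos)
      qed
      moreover have "card (Y - L) + card L = card Y"
        using card_Diff_subset[OF finite_subset[OF LY finY] LY] card_mono[OF finY LY] by simp
      ultimately show ?thesis by linarith
    qed
    show ?thesis
    proof (cases "\<forall>t\<in>lst L h. good (set t)")
      case True
      then have "good L" using helly LY Y by blast
      then show ?thesis using LY cardL by blast
    next
      case False
      then obtain T' where T': "T' \<in> lst L h" "\<not> good (set T')" by blast
      have T'Y: "set T' \<subseteq> Y" using T' LY by (auto simp: lst_def)
      have "(\<Sum>s'\<in>lst Y r. card (DW good Y (T' # Ts) s'))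
           \<le> (\<Sum>s'\<in>lst Y r. \<Sum>a\<in>set T'. card {b\<in>Y. a \<in> DW good Y Ts (b # s')})"
      proof (rule sum_mono)
        fix s' assume "s' \<in> lst Y r"
        have "card (DW good Y (T' # Ts) s') \<le> card (\<Union>a\<in>set T'. {b\<in>Y. a \<in> DW good Y Ts (b # s')})"
          by (rule card_mono) (use finY DW_cons_sub[OF T'Y] in auto)
        also have "\<dots> \<le> (\<Sum>a\<in>set T'. card {b\<in>Y. a \<in> DW good Y Ts (b # s')})"
          by (rule card_UN_le) simp
        finally show "card (DW good Y (T' # Ts) s') \<le> (\<Sum>a\<in>set T'. card {b\<in>Y. a \<in> DW good Y Ts (b # s')})" .
      qed
      also have "\<dots> = (\<Sum>a\<in>set T'. \<Sum>s'\<in>lst Y r. card {b\<in>Y. a \<in> DW good Y Ts (b # s')})"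
        by (rule sum.swap)
      also have "\<dots> = (\<Sum>a\<in>set T'. \<phi> a)"
        unfolding \<phi>_def by (rule sum.cong[OF refl], rule sum_card_cons[OF finY])
      finally have le1: "real (\<Sum>s'\<in>lst Y r. card (DW good Y (T' # Ts) s')) \<le> (\<Sum>a\<in>set T'. real (\<phi> a))"
        by (simp flip: of_nat_sum)
      also have "\<dots> \<le> (\<Sum>a\<in>set T'. 2 * \<kappa> * ?M ^ Suc r)"
        by (rule sum_mono) (use T' in \<open>auto simp: L_def lst_def\<close>)
      also have "\<dots> = real (card (set T')) * (2 * \<kappa> * ?M ^ Suc r)" by simp
      also have "\<dots> \<le> real h * (2 * \<kappa> * ?M ^ Suc r)"
      proof -
        have "card (set T') \<le> h" using card_length[of T'] T' by (simp add: lst_def)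
        then show ?thesis using kpos by (intro mult_right_mono) auto
      qed
      also have "\<dots> = (2 * real h) ^ Suc j * eps h * ?M ^ (h - Suc j)"
        using hr by (simp add: \<kappa>_def)
      finally have fin: "real (\<Sum>s'\<in>lst Y (h - 1 - Suc j). card (DW good Y (T' # Ts) s'))
          \<le> (2 * real h) ^ Suc j * eps h * ?M ^ (h - Suc j)" by (simp add: r_def)
      have "\<forall>T\<in>set (T' # Ts). T \<in> lst Y h \<and> \<not> good (set T)"
        using blk T' T'Y by (auto simp: lst_def)
      then show ?thesis using fin len by (intro disjI2 exI[of _ "T' # Ts"]) simp
    qed
  qed
qed

lemma dense:
  assumes Y: "Y \<subseteq> V"
    and ngY: "real (ng Y) \<le> eps h * real (card Y) ^ h"
  shows "\<exists>Z\<subseteq>Y. good Z \<and> real (card Z) \<ge> real (card Y) / 2"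
proof (cases "card Y = 0")
  case True
  then show ?thesis using good_empty by (intro exI[of _ "{}"]) auto
next
  case False
  then have Mpos: "0 < card Y" by simp
  have finY: "finite Y" using Y finV finite_subset by blast
  from dense_iter[OF Y Mpos ngY, of "h - 1"] show ?thesis
  proof
    assume "\<exists>Ts. length Ts = h - 1 \<and> (\<forall>T\<in>set Ts. T \<in> lst Y h \<and> \<not> good (set T)) \<and>
        real (\<Sum>s\<in>lst Y (h - 1 - (h - 1)). card (DW good Y Ts s)) \<le> (2 * real h) ^ (h - 1) * eps h * real (card Y) ^ (h - (h - 1))"
    then obtain Ts where len: "length Ts = h - 1" and blk: "\<forall>T\<in>set Ts. T \<in> lst Y h \<and> \<not> good (set T)"
      and bnd: "real (\<Sum>s\<in>lst Y (h - 1 - (h - 1)). card (DW good Y Ts s)) \<le> (2 * real h) ^ (h - 1) * eps h * real (card Y) ^ (h - (h - 1))"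
      by blast
    have "h - (h - 1) = 1" using hpos by simp
    then have bnd2: "real (card (DW good Y Ts [])) \<le> real (card Y) / 2"
      using bnd hpos by (simp add: lst_0 eps_def)
    have blk2: "\<forall>T\<in>set Ts. set T \<subseteq> V \<and> \<not> good (set T)"
      using blk Y by (auto simp: lst_def)
    have g: "good (XW good Y Ts [])" by (rule final_good[OF Y len blk2])
    have XD: "XW good Y Ts [] = Y - DW good Y Ts []" by (auto simp: XW_def DW_def)
    have "card (XW good Y Ts []) + card (DW good Y Ts []) = card Y"
      unfolding XD using card_Diff_subset[OF finite_subset[OF DW_sub finY] DW_sub] card_mono[OF finY DW_sub]
      by simp
    then have "real (card (XW good Y Ts [])) \<ge> real (card Y) / 2" using bnd2 by linarith
    then show ?thesis using g XD by (intro exI[of _ "XW good Y Ts []"]) auto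
  qed auto
qed

end


fun cc :: "real \<Rightarrow> nat \<Rightarrow> nat \<Rightarrow> real" where
  "cc \<alpha> h 0 = \<alpha> / real h ^ h"
| "cc \<alpha> h (Suc j) = cc \<alpha> h j * eps h * (cc \<alpha> h j / 2) ^ h / 2"

lemma eps_le: "0 < h \<Longrightarrow> eps h \<le> 1 / 2"
proof -
  assume "0 < h"
  then have "1 \<le> (2 * real h) ^ (h - 1)" by (intro one_le_power) simp
  then show ?thesis by (simp add: eps_def field_simps)
qed

lemma cc_props:
  assumes "0 < \<alpha>" "\<alpha> \<le> 1" "0 < h"
  shows "0 < cc \<alpha> h j \<and> cc \<alpha> h j \<le> 1"
proof (induction j)
  case 0
  have "1 \<le> real h ^ h" using assms by (intro one_le_power) simp
  then have "\<alpha> / real h ^ h \<le> \<alpha> / 1" using assms by (intro divide_left_mono) auto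
  moreover have "0 < \<alpha> / real h ^ h" using assms by simp
  ultimately show ?case using assms(2) by (auto intro: order_trans)
next
  case (Suc j)
  let ?c = "cc \<alpha> h j"
  have e: "0 < eps h" "eps h \<le> 1/2" using eps_pos eps_le assms by auto
  have p: "0 < (?c / 2) ^ h" "(?c / 2) ^ h \<le> 1" using Suc.IH by (auto intro!: power_le_one)
  have "?c * eps h * (?c / 2) ^ h / 2 \<le> 1 * 1 * 1 / 2"
    by (intro divide_right_mono mult_mono) (use Suc.IH e p in auto)
  then show ?case using Suc.IH e p by simp
qed

lemma cc_Suc_le:
  assumes "0 < \<alpha>" "\<alpha> \<le> 1" "0 < h"
  shows "cc \<alpha> h (Suc j) \<le> cc \<alpha> h j / 2"
proof -
  let ?c = "cc \<alpha> h j"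
  have c: "0 < ?c" "?c \<le> 1" using cc_props[OF assms] by auto
  have e: "0 < eps h" "eps h \<le> 1/2" using eps_pos eps_le assms by auto
  have p: "0 < (?c / 2) ^ h" "(?c / 2) ^ h \<le> 1" using c by (auto intro!: power_le_one)
  have "eps h * (?c / 2) ^ h \<le> 1 * 1" using e p by (intro mult_mono) auto
  then have "?c * (eps h * (?c / 2) ^ h) \<le> ?c * 1" using c by (intro mult_left_mono) auto
  then show ?thesis by (simp add: mult.assoc)
qed

lemma cc_le_half:
  assumes "0 < \<alpha>" "\<alpha> \<le> 1" "0 < h"
  shows "j < k \<Longrightarrow> cc \<alpha> h k \<le> cc \<alpha> h j / 2"
proof (induction k)
  case 0 then show ?case by simp
next
  case (Suc k)
  show ?case
  proof (cases "j = k")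
    case True then show ?thesis using cc_Suc_le[OF assms] by simp
  next
    case False
    then have "cc \<alpha> h k \<le> cc \<alpha> h j / 2" using Suc by simp
    moreover have "cc \<alpha> h (Suc k) \<le> cc \<alpha> h k / 2" using cc_Suc_le[OF assms] by simp
    moreover have "0 < cc \<alpha> h k" using cc_props[OF assms] by simp
    ultimately show ?thesis by linarith
  qed
qed

lemma big_count:
  fixes f :: "'b \<Rightarrow> real"
  assumes finP: "finite P" and fle: "\<forall>p\<in>P. f p \<le> N" and sumf: "c * K * N \<le> (\<Sum>p\<in>P. f p)"
    and cardP: "real (card P) \<le> K" and Npos: "0 < N" and cpos: "0 < c"
  shows "c / 2 * K \<le> real (card {p\<in>P. c / 2 * N \<le> f p})"
proof -
  define B where "B = {p\<in>P. c / 2 * N \<le> f p}"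
  have BP: "B \<subseteq> P" by (auto simp: B_def)
  have finB: "finite B" using finP BP finite_subset by blast
  have e1: "(\<Sum>p\<in>P. f p) = (\<Sum>p\<in>B. f p) + (\<Sum>p\<in>P - B. f p)"
    using sum.subset_diff[OF BP finP] by (simp add: add.commute)
  have e2: "(\<Sum>p\<in>B. f p) \<le> (\<Sum>p\<in>B. N)" by (rule sum_mono) (use fle BP in auto)
  have e3: "(\<Sum>p\<in>P - B. f p) \<le> (\<Sum>p\<in>P - B. c / 2 * N)" by (rule sum_mono) (auto simp: B_def)
  have s1: "(\<Sum>p\<in>P. f p) \<le> real (card B) * N + real (card (P - B)) * (c / 2 * N)"
    using e1 e2 e3 by simp
  have "card (P - B) \<le> card P" by (rule card_mono[OF finP]) auto
  then have "real (card (P - B)) \<le> K" using cardP by linarith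
  moreover have "0 \<le> c / 2 * N" using cpos Npos by simp
  ultimately have "real (card (P - B)) * (c / 2 * N) \<le> K * (c / 2 * N)"
    by (intro mult_right_mono) auto
  then have "c * K * N \<le> real (card B) * N + K * (c / 2 * N)"
    using sumf s1 by linarith
  then have "(c / 2 * K) * N \<le> real (card B) * N" by (simp add: algebra_simps)
  then show ?thesis using Npos unfolding B_def by simp
qed



context absF begin

definition NB :: "'a list set" where "NB = {t\<in>lst V h. \<not> good (set t)}"

definition Q :: "nat \<Rightarrow> nat" where
  "Q j = (\<Sum>Ts\<in>lst NB j. \<Sum>s\<in>lst V (h - 1 - j). card (XW good V Ts s))"

lemma finNB: "finite NB" unfolding NB_def using lst_finite[OF finV] by simp

lemma cardNB: "card NB \<le> card V ^ h"
  unfolding NB_def using card_mono[OF lst_finite[OF finV], of "{t\<in>lst V h. \<not> good (set t)}" h]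
  lst_card[OF finV] by auto

lemma XW_cons: "T \<in> lst V h \<Longrightarrow> XW good V (T # Ts) s' = {b\<in>V. set T \<subseteq> XW good V Ts (b # s')}"
  by (auto simp: XW_def lst_def insert_commute)

lemma ng_eq: "Y \<subseteq> V \<Longrightarrow> card {T\<in>NB. set T \<subseteq> Y} = ng Y"
  unfolding ng_def NB_def lst_def by (rule arg_cong[where f=card]) auto

lemma Q_step:
  assumes "j < h - 1"
  shows "Q (Suc j) = (\<Sum>Ts\<in>lst NB j. \<Sum>s\<in>lst V (h - 1 - j). ng (XW good V Ts s))"
proof -
  define r where "r = h - 1 - Suc j"
  have hr: "h - 1 - j = Suc r" using assms by (simp add: r_def)
  have "Q (Suc j) = (\<Sum>T\<in>NB. \<Sum>Ts\<in>lst NB j. \<Sum>s'\<in>lst V r. card (XW good V (T # Ts) s'))"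
    unfolding Q_def r_def by (rule sum_lst_Suc[OF finNB])
  also have "\<dots> = (\<Sum>T\<in>NB. \<Sum>Ts\<in>lst NB j. \<Sum>s'\<in>lst V r. card {b\<in>V. set T \<subseteq> XW good V Ts (b # s')})"
    by (intro sum.cong refl) (simp add: XW_cons NB_def)
  also have "\<dots> = (\<Sum>Ts\<in>lst NB j. \<Sum>T\<in>NB. \<Sum>s'\<in>lst V r. card {b\<in>V. set T \<subseteq> XW good V Ts (b # s')})"
    by (rule sum.swap)
  also have "\<dots> = (\<Sum>Ts\<in>lst NB j. \<Sum>s'\<in>lst V r. \<Sum>T\<in>NB. card {b\<in>V. set T \<subseteq> XW good V Ts (b # s')})"
    by (rule sum.cong[OF refl], rule sum.swap)
  also have "\<dots> = (\<Sum>Ts\<in>lst NB j. \<Sum>s'\<in>lst V r. \<Sum>b\<in>V. card {T\<in>NB. set T \<subseteq> XW good V Ts (b # s')})"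
    by (intro sum.cong refl) (rule card_swap[OF finNB finV])
  also have "\<dots> = (\<Sum>Ts\<in>lst NB j. \<Sum>s'\<in>lst V r. \<Sum>b\<in>V. ng (XW good V Ts (b # s')))"
    by (intro sum.cong refl ng_eq) (auto simp: XW_def)
  also have "\<dots> = (\<Sum>Ts\<in>lst NB j. \<Sum>b\<in>V. \<Sum>s'\<in>lst V r. ng (XW good V Ts (b # s')))"
    by (intro sum.cong refl) (rule sum.swap)
  also have "\<dots> = (\<Sum>Ts\<in>lst NB j. \<Sum>s\<in>lst V (Suc r). ng (XW good V Ts s))"
    by (intro sum.cong refl) (rule sum_lst_Suc[OF finV, symmetric])
  finally show ?thesis by (simp only: hr)
qed

lemma Q_0: "Q 0 = card {t\<in>lst V h. good (set t)}"
proof -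
  have "Q 0 = (\<Sum>s\<in>lst V (h - 1). card {v\<in>V. good (set (v # s))})"
    by (simp add: Q_def lst_0 XW_def)
  also have "\<dots> = card {t\<in>lst V (Suc (h - 1)). good (set t)}"
    by (rule sum_card_cons[OF finV])
  finally show ?thesis using hpos by simp
qed

lemma sets_le_tuples:
  "card {S. S \<subseteq> V \<and> card S = h \<and> good S} \<le> card {t\<in>lst V h. good (set t)}"
proof -
  define f where "f S = (SOME xs. set xs = S \<and> distinct xs)" for S :: "'a set"
  have fS: "set (f S) = S \<and> distinct (f S)" if "finite S" for S
    unfolding f_def by (rule someI_ex) (rule finite_distinct_list[OF that])
  have "inj_on f {S. S \<subseteq> V \<and> card S = h \<and> good S}"
  proof (rule inj_onI)
    fix S1 S2 assume "S1 \<in> {S. S \<subseteq> V \<and> card S = h \<and> good S}" "S2 \<in> {S. S \<subseteq> V \<and> card S = h \<and> good S}" "f S1 = f S2"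
    then show "S1 = S2" using fS finite_subset[OF _ finV] by (metis mem_Collect_eq)
  qed
  moreover have "f ` {S. S \<subseteq> V \<and> card S = h \<and> good S} \<subseteq> {t\<in>lst V h. good (set t)}"
  proof
    fix t assume "t \<in> f ` {S. S \<subseteq> V \<and> card S = h \<and> good S}"
    then obtain S where S: "S \<subseteq> V" "card S = h" "good S" and t: "t = f S" by blast
    have "finite S" using S finite_subset finV by blast
    then have "set t = S" "distinct t" using fS t by auto
    then show "t \<in> {t\<in>lst V h. good (set t)}" using S distinct_card[of t] by (auto simp: lst_def)
  qed
  ultimately show ?thesis
    by (rule card_inj_on_le) (simp add: lst_finite[OF finV])
qed

end


context absF begin

lemma main:
  assumes hN: "h \<le> card V" and \<alpha>: "0 < \<alpha>" "\<alpha> \<le> 1"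
    and dens: "\<alpha> * real (card V choose h) \<le> real (card {S. S \<subseteq> V \<and> card S = h \<and> good S})"
  shows "\<exists>Z\<subseteq>V. good Z \<and> cc \<alpha> h (h - 1) / 2 * real (card V) \<le> real (card Z)"
proof (rule ccontr)
  assume nt: "\<not> ?thesis"
  define \<beta> where "\<beta> = cc \<alpha> h (h - 1) / 2"
  define N where "N = real (card V)"
  have Npos: "0 < N" using hN hpos by (simp add: N_def)
  have NoBig: "real (card Z) < \<beta> * N" if "Z \<subseteq> V" "good Z" for Z
    using nt that by (auto simp: \<beta>_def N_def not_le)
  have ND: "eps h * real (card Y) ^ h < real (ng Y)" if Y: "Y \<subseteq> V" and YN: "2 * \<beta> * N \<le> real (card Y)" for Y
  proof (rule ccontr)
    assume "\<not> eps h * real (card Y) ^ h < real (ng Y)"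
    then obtain Z where "Z \<subseteq> Y" "good Z" "real (card Y) / 2 \<le> real (card Z)"
      using dense[OF Y] by force
    moreover have "real (card Z) < \<beta> * N" using NoBig \<open>Z \<subseteq> Y\<close> Y \<open>good Z\<close> by blast
    ultimately show False using YN by linarith
  qed
  have ccp: "0 < cc \<alpha> h j" "cc \<alpha> h j \<le> 1" for j using cc_props[OF \<alpha> hpos] by auto
  have claim: "j \<le> h - 1 \<Longrightarrow> cc \<alpha> h j * N ^ (h * j + (h - j)) \<le> real (Q j)" for j
  proof (induction j)
    case 0
    have "cc \<alpha> h 0 * N ^ (h * 0 + (h - 0)) = \<alpha> * (N / real h) ^ h"
      by (simp add: power_divide)
    also have "\<dots> \<le> \<alpha> * real (card V choose h)"
      using binomial_ge_n_over_k_pow_k[OF hN, where 'a=real] \<alpha> by (simp add: N_def)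
    also have "\<dots> \<le> real (card {S. S \<subseteq> V \<and> card S = h \<and> good S})" by (rule dens)
    also have "\<dots> \<le> real (Q 0)" using sets_le_tuples by (simp add: Q_0)
    finally show ?case .
  next
    case (Suc j)
    then have jl: "j < h - 1" by simp
    let ?c = "cc \<alpha> h j"
    define r where "r = h - 1 - j"
    have hr: "h - j = Suc r" "h - Suc j = r" using jl by (auto simp: r_def)
    define P where "P = lst NB j \<times> lst V r"
    define f where "f p = real (card (XW good V (fst p) (snd p)))" for p
    have finP: "finite P" unfolding P_def by (intro finite_cartesian_product lst_finite finNB finV)
    have Qj: "real (Q j) = (\<Sum>p\<in>P. f p)"
      unfolding Q_def P_def f_def r_def
      by (simp add: sum.cartesian_product case_prod_beta)
    have Qs: "real (Q (Suc j)) = (\<Sum>p\<in>P. real (ng (XW good V (fst p) (snd p))))"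
      unfolding Q_step[OF jl] P_def r_def
      by (simp add: sum.cartesian_product case_prod_beta)
    define K where "K = N ^ (h * j + r)"
    have Kpos: "0 < K" using Npos by (simp add: K_def)
    have cardP: "real (card P) \<le> K"
    proof -
      have "card P = card NB ^ j * card V ^ r"
        unfolding P_def by (simp add: card_cartesian_product lst_card finNB finV)
      also have "\<dots> \<le> (card V ^ h) ^ j * card V ^ r"
        by (intro mult_right_mono power_mono cardNB) auto
      also have "\<dots> = card V ^ (h * j + r)" by (simp add: power_mult power_add)
      finally show ?thesis by (simp add: K_def N_def flip: of_nat_power)
    qed
    have fle: "\<forall>p\<in>P. f p \<le> N"
      unfolding f_def N_def by (auto intro!: card_mono finV simp: XW_def)
    have sumf: "?c * K * N \<le> (\<Sum>p\<in>P. f p)"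
    proof -
      have kn: "K * N = N ^ (h * j + (h - j))" unfolding K_def hr(1) by (simp add: mult.commute)
      have "?c * K * N = ?c * N ^ (h * j + (h - j))" by (simp only: mult.assoc kn)
      moreover have "?c * N ^ (h * j + (h - j)) \<le> real (Q j)" using Suc.IH jl by simp
      ultimately show ?thesis using Qj by linarith
    qed
    define Big where "Big = {p\<in>P. ?c / 2 * N \<le> f p}"
    have cardBig: "?c / 2 * K \<le> real (card Big)"
      unfolding Big_def by (rule big_count[OF finP fle sumf cardP Npos ccp(1)])
    have BigP: "Big \<subseteq> P" by (auto simp: Big_def)
    have hl: "cc \<alpha> h (h - 1) \<le> ?c / 2" using cc_le_half[OF \<alpha> hpos jl] .
    have ngBig: "eps h * (?c / 2 * N) ^ h \<le> real (ng (XW good V (fst p) (snd p)))" if p: "p \<in> Big" for p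
    proof -
      let ?X = "XW good V (fst p) (snd p)"
      have XV: "?X \<subseteq> V" by (auto simp: XW_def)
      have big: "?c / 2 * N \<le> real (card ?X)" using p by (simp add: Big_def f_def)
      have b1: "2 * \<beta> * N = cc \<alpha> h (h - 1) * N" by (simp add: \<beta>_def)
      have b2: "cc \<alpha> h (h - 1) * N \<le> ?c / 2 * N" by (rule mult_right_mono[OF hl]) (use Npos in simp)
      have "2 * \<beta> * N \<le> real (card ?X)" using b1 b2 big by linarith
      then have "eps h * real (card ?X) ^ h < real (ng ?X)" by (rule ND[OF XV])
      moreover have "(?c / 2 * N) ^ h \<le> real (card ?X) ^ h"
        by (rule power_mono[OF big]) (use ccp(1)[of j] Npos in simp)
      moreover have "eps h * (?c / 2 * N) ^ h \<le> eps h * real (card ?X) ^ h"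
        by (rule mult_left_mono[OF calculation(2)]) (use eps_pos[of h] in simp)
      ultimately show ?thesis by linarith
    qed
    have "?c / 2 * K * (eps h * (?c / 2 * N) ^ h) \<le> real (card Big) * (eps h * (?c / 2 * N) ^ h)"
      by (rule mult_right_mono[OF cardBig]) (use eps_pos[of h] ccp(1)[of j] Npos in simp)
    also have "\<dots> = (\<Sum>p\<in>Big. eps h * (?c / 2 * N) ^ h)" by simp
    also have "\<dots> \<le> (\<Sum>p\<in>Big. real (ng (XW good V (fst p) (snd p))))"
      by (rule sum_mono) (rule ngBig)
    also have "\<dots> \<le> (\<Sum>p\<in>P. real (ng (XW good V (fst p) (snd p))))"
      by (rule sum_mono2[OF finP BigP]) simp
    also have "\<dots> = real (Q (Suc j))" by (rule Qs[symmetric])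
    finally have fin: "?c / 2 * K * (eps h * (?c / 2 * N) ^ h) \<le> real (Q (Suc j))" .
    have ex: "h * Suc j + (h - Suc j) = (h * j + r) + h" using hr by simp
    have e1: "N ^ (h * Suc j + (h - Suc j)) = K * N ^ h" unfolding ex K_def by (rule power_add)
    have e2: "(?c / 2 * N) ^ h = (?c / 2) ^ h * N ^ h" by (rule power_mult_distrib)
    have "cc \<alpha> h (Suc j) * N ^ (h * Suc j + (h - Suc j)) = ?c / 2 * K * (eps h * (?c / 2 * N) ^ h)"
      unfolding e1 e2 cc.simps by (simp add: field_simps)
    then show ?case using fin by (rule ord_eq_le_trans)
  qed
  have "cc \<alpha> h (h - 1) * N ^ (h * (h - 1) + (h - (h - 1))) \<le> real (Q (h - 1))"
    by (rule claim) simp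
  moreover have "h - (h - 1) = 1" using hpos by simp
  moreover have "real (Q (h - 1)) \<le> N ^ (h * (h - 1)) * (\<beta> * N)"
  proof -
    have "real (Q (h - 1)) = (\<Sum>Ts\<in>lst NB (h - 1). real (card (XW good V Ts [])))"
      by (simp add: Q_def lst_0)
    also have "\<dots> \<le> (\<Sum>Ts\<in>lst NB (h - 1). \<beta> * N)"
    proof (rule sum_mono)
      fix Ts assume Ts: "Ts \<in> lst NB (h - 1)"
      have "good (XW good V Ts [])"
        by (rule final_good) (use Ts in \<open>auto simp: lst_def NB_def\<close>)
      then show "real (card (XW good V Ts [])) \<le> \<beta> * N"
        using NoBig[of "XW good V Ts []"] by (auto simp: XW_def)
    qed
    also have "\<dots> = real (card NB ^ (h - 1)) * (\<beta> * N)" by (simp add: lst_card finNB)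
    also have "\<dots> \<le> N ^ (h * (h - 1)) * (\<beta> * N)"
    proof (rule mult_right_mono)
      have "card NB ^ (h - 1) \<le> (card V ^ h) ^ (h - 1)" by (intro power_mono cardNB) auto
      then show "real (card NB ^ (h - 1)) \<le> N ^ (h * (h - 1))"
        by (simp add: N_def power_mult flip: of_nat_power)
      show "0 \<le> \<beta> * N" using ccp(1)[of "h - 1"] Npos by (simp add: \<beta>_def)
    qed
    finally show ?thesis .
  qed
  ultimately have A: "cc \<alpha> h (h - 1) * (N * N ^ (h * (h - 1))) \<le> N ^ (h * (h - 1)) * (\<beta> * N)"
    by (simp add: power_add)
  define M where "M = N * N ^ (h * (h - 1))"
  have Mpos: "0 < M" using Npos by (simp add: M_def)
  have eqM: "N ^ (h * (h - 1)) * (\<beta> * N) = cc \<alpha> h (h - 1) / 2 * M" by (simp add: M_def \<beta>_def)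
  have "cc \<alpha> h (h - 1) * M \<le> cc \<alpha> h (h - 1) / 2 * M" using A eqM unfolding M_def by linarith
  then have "cc \<alpha> h (h - 1) \<le> cc \<alpha> h (h - 1) / 2" using Mpos by (rule mult_right_le_imp_le)
  then show False using ccp(1)[of "h - 1"] by simp
qed

end


lemma box_nonempty: "is_box d C \<Longrightarrow> C \<noteq> {}"
proof -
  assume "is_box d C"
  then obtain a b where ab: "\<forall>i<d. a i \<le> b i" "C = box_of d a b" by (auto simp: is_box_def)
  have "(\<lambda>i. if i < d then a i else 0) \<in> C" using ab by (auto simp: box_of_def)
  then show ?thesis by blast
qed

lemma pierceable_mono: "pierceable n B \<Longrightarrow> A \<subseteq> B \<Longrightarrow> pierceable n A"
  unfolding pierceable_def by blast

lemma pierceable_empty: "pierceable n {}"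
  unfolding pierceable_def by (intro exI[of _ "{}"]) simp

lemma hc_prop_hc: "hc_defined d n \<Longrightarrow> hc_prop d n (hc d n)"
  unfolding hc_defined_def hc_def by (rule LeastI_ex)

lemma hc_prop_0: "hc_prop d 0 1"
  unfolding hc_prop_def
proof (intro conjI allI impI)
  fix Fs :: "nat \<Rightarrow> (nat \<Rightarrow> real) set set"
  assume a: "(\<forall>i<1. \<forall>C\<in>Fs i. is_box d C) \<and> (\<forall>g. (\<forall>i<1. g i \<in> Fs i) \<longrightarrow> pierceable 0 (g ` {..<1}))"
  show "\<exists>i<1. pierceable 0 (Fs i)"
  proof (cases "Fs 0 = {}")
    case True then show ?thesis using pierceable_empty by auto
  next
    case False
    then obtain C where C: "C \<in> Fs 0" by blast
    have imp: "(\<forall>i<(1::nat). (\<lambda>_. C) i \<in> Fs i) \<longrightarrow> pierceable 0 ((\<lambda>_. C) ` {..<(1::nat)})"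
      by (rule a[THEN conjunct2, THEN spec[of _ "\<lambda>_. C"]])
    have "\<forall>i<(1::nat). (\<lambda>_. C) i \<in> Fs i" using C by simp
    then have "pierceable 0 ((\<lambda>_. C) ` {..<(1::nat)})" using imp by (rule mp[rotated])
    then have False by (auto simp: pierceable_def)
    then show ?thesis ..
  qed
qed simp

lemma hc_0: "hc d 0 = 1"
proof -
  have "hc d 0 \<le> 1" unfolding hc_def by (rule Least_le) (rule hc_prop_0)
  moreover have "hc_defined d 0" unfolding hc_defined_def by (rule exI[of _ 1]) (rule hc_prop_0)
  then have "hc_prop d 0 (hc d 0)" by (rule hc_prop_hc)
  then have "0 < hc d 0" by (simp add: hc_prop_def)
  ultimately show ?thesis by simp
qed

theorem theorem6:
  fixes \<alpha> :: real and h :: nat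
  assumes "0 < \<alpha>" and "\<alpha> < 1"
  shows "\<exists>\<beta>::real. 0 < \<beta> \<and> \<beta> < 1 \<and>
    (\<forall>d n (F :: (nat \<Rightarrow> real) set set).
       hc_defined d n \<and> hc d n = h \<and> finite F \<and> (\<forall>C\<in>F. is_box d C) \<and>
       real (card {S. S \<subseteq> F \<and> card S = hc d n \<and> pierceable n S})
         \<ge> \<alpha> * real (card F choose hc d n)
       \<longrightarrow> (\<exists>S\<subseteq>F. real (card S) \<ge> \<beta> * real (card F) \<and> pierceable n S))"
proof (cases "h = 0")
  case True
  show ?thesis
  proof (intro exI[of _ "\<alpha> / 2"] conjI allI impI)
    fix d n and F :: "(nat \<Rightarrow> real) set set"
    assume as0: "hc_defined d n \<and> hc d n = h \<and> finite F \<and> (\<forall>C\<in>F. is_box d C) \<and>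
       real (card {S. S \<subseteq> F \<and> card S = hc d n \<and> pierceable n S}) \<ge> \<alpha> * real (card F choose hc d n)"
    have "hc_defined d n" using as0 by (rule conjunct1)
    then have "hc_prop d n (hc d n)" by (rule hc_prop_hc)
    moreover have "hc d n = 0" using as0[THEN conjunct2, THEN conjunct1] True by simp
    ultimately have "hc_prop d n 0" by simp
    then have False by (simp add: hc_prop_def)
    then show "\<exists>S\<subseteq>F. real (card S) \<ge> \<alpha> / 2 * real (card F) \<and> pierceable n S" ..
  qed (use assms in auto)
next
  case False
  then have hpos: "0 < h" by simp
  have a1: "\<alpha> \<le> 1" using assms by simp
  define \<beta> where "\<beta> = cc \<alpha> h (h - 1) / 2"
  have ccp: "0 < cc \<alpha> h j" "cc \<alpha> h j \<le> 1" for j using cc_props[OF assms(1) a1 hpos] by auto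
  have b0: "0 < \<beta>" "\<beta> < 1" using ccp[of "h - 1"] by (auto simp: \<beta>_def)
  have cc0: "cc \<alpha> h (h - 1) \<le> cc \<alpha> h 0"
  proof (cases "h - 1 = 0")
    case True then show ?thesis by simp
  next
    case False
    then have "cc \<alpha> h (h - 1) \<le> cc \<alpha> h 0 / 2" by (intro cc_le_half[OF assms(1) a1 hpos]) simp
    then show ?thesis using ccp[of 0] by linarith
  qed
  have bh: "\<beta> * real h \<le> 1"
  proof -
    have "real h \<le> real h ^ h" using hpos by (intro self_le_power) auto
    then have "\<alpha> * real h \<le> 1 * real h ^ h" using a1 by (intro mult_mono) auto
    then have "cc \<alpha> h 0 * real h \<le> 1" using hpos by (simp add: field_simps)
    moreover have "\<beta> * real h \<le> cc \<alpha> h 0 * real h"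
    proof (rule mult_right_mono)
      show "\<beta> \<le> cc \<alpha> h 0" unfolding \<beta>_def using cc0 ccp(1)[of "h - 1"] by linarith
    qed simp
    ultimately show ?thesis by linarith
  qed
  show ?thesis
  proof (intro exI[of _ \<beta>] conjI allI impI b0)
    fix d n and F :: "(nat \<Rightarrow> real) set set"
    assume as: "hc_defined d n \<and> hc d n = h \<and> finite F \<and> (\<forall>C\<in>F. is_box d C) \<and>
       real (card {S. S \<subseteq> F \<and> card S = hc d n \<and> pierceable n S}) \<ge> \<alpha> * real (card F choose hc d n)"
    have hd: "hc_defined d n" using as by (rule conjunct1)
    have hch: "hc d n = h" using as[THEN conjunct2] by (rule conjunct1)
    have finF: "finite F" using as[THEN conjunct2, THEN conjunct2] by (rule conjunct1)
    have boxes: "\<forall>C\<in>F. is_box d C" using as[THEN conjunct2, THEN conjunct2, THEN conjunct2] by (rule conjunct1)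
    have dens0: "\<alpha> * real (card F choose hc d n) \<le> real (card {S. S \<subseteq> F \<and> card S = hc d n \<and> pierceable n S})"
      using as[THEN conjunct2, THEN conjunct2, THEN conjunct2] by (rule conjunct2)
    have hp: "hc_prop d n h" using hc_prop_hc[OF hd] hch by (simp only:)
    have dens: "\<alpha> * real (card F choose h) \<le> real (card {S. S \<subseteq> F \<and> card S = h \<and> pierceable n S})"
      using dens0 hch by (simp only:)
    have hpall: "\<forall>Fs. (\<forall>i<h. \<forall>C\<in>Fs i. is_box d C) \<and>
        (\<forall>g. (\<forall>i<h. g i \<in> Fs i) \<longrightarrow> pierceable n (g ` {..<h})) \<longrightarrow> (\<exists>i<h. pierceable n (Fs i))"
      using hp unfolding hc_prop_def by (rule conjunct2)
    show "\<exists>S\<subseteq>F. real (card S) \<ge> \<beta> * real (card F) \<and> pierceable n S"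
    proof (cases "h \<le> card F")
      case True
      interpret absF F "pierceable n" h
      proof
        show "finite F" by (rule finF)
        show "0 < h" by (rule hpos)
        show "\<And>B A. pierceable n B \<Longrightarrow> A \<subseteq> B \<Longrightarrow> pierceable n A" by (rule pierceable_mono)
        show "pierceable n {}" by (rule pierceable_empty)
        fix Fs :: "nat \<Rightarrow> (nat \<Rightarrow> real) set set"
        assume sub: "\<forall>i<h. Fs i \<subseteq> F" and tr: "\<forall>g. (\<forall>i<h. g i \<in> Fs i) \<longrightarrow> pierceable n (g ` {..<h})"
        have "\<forall>i<h. \<forall>C\<in>Fs i. is_box d C" using sub boxes by blast
        then show "\<exists>i<h. pierceable n (Fs i)" using hpall[rule_format, of Fs] tr by blast
      qed
      obtain Z where "Z \<subseteq> F" "pierceable n Z" "cc \<alpha> h (h - 1) / 2 * real (card F) \<le> real (card Z)"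
        using main[OF True assms(1) a1 dens] by blast
      then show ?thesis by (auto simp: \<beta>_def)
    next
      case False
      show ?thesis
      proof (cases "F = {}")
        case True
        then show ?thesis using pierceable_empty by (intro exI[of _ "{}"]) auto
      next
        case Fne: False
        then obtain C where C: "C \<in> F" by blast
        have n0: "n \<noteq> 0"
        proof
          assume "n = 0"
          then have "h = 1" using hch hc_0 by simp
          moreover have "card F \<noteq> 0" using Fne finF by simp
          ultimately show False using \<open>\<not> h \<le> card F\<close> by simp
        qed
        obtain x where x: "x \<in> C" using box_nonempty boxes C by blast
        have "pierceable n {C}" unfolding pierceable_def
          using x n0 by (intro exI[of _ "{x}"]) auto
        moreover have "\<beta> * real (card F) \<le> real (card {C})"
        proof -
          have "\<beta> * real (card F) \<le> \<beta> * real h"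
            using False b0 by (intro mult_left_mono) auto
          then show ?thesis using bh by simp
        qed
        ultimately show ?thesis using C by (intro exI[of _ "{C}"]) auto
      qed
    qed
  qed
qed


end
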